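(* Let $\mathcal{D}$ be an isotropic distribution on $\mathbb{R}^{d}$ with $\mathbb{P}_{\omega\sim\mathcal{D}}(\omega=0)=0$, let $\mathbf{z}\in\mathbb{R}^d$, and let $f:\mathbb{R}\to\mathbb{R}$ belong to class F1. Let $\widehat{F}^{\mathrm{iid}}_{f,\mathcal{D}}(\mathbf{z})$ and $\widehat{F}^{\mathrm{ort}}_{f,\mathcal{D}}(\mathbf{z})$ be the i.i.d. and the (block-)orthogonal Monte Carlo estimators of $F_{f,\mathcal{D}}(\mathbf{z})=\mathbb{E}_{\omega\sim\mathcal{D}}[f(\omega^{\top}\mathbf{z})]$ with $s$ samples. Then for every $\lambda\in\mathbb{R}$ such that $\mathbb{E}_{\omega\sim\mathcal{D}}[e^{\lambda f(\omega^\top\mathbf{z})/s}]<\infty$, $$\mathbb{E}\big[e^{\lambda\widehat{F}^{\mathrm{ort}}_{f,\mathcal{D}}(\mathbf{z})}\big]\le\mathbb{E}\big[e^{\lambda\widehat{F}^{\mathrm{iid}}_{f,\mathcal{D}}(\mathbf{z})}\big].$$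
   Context: Isotropic: $Q\omega\overset{d}{=}\omega$ for $\omega\sim\mathcal{D}$ and every orthogonal $Q$. An orthogonal ensemble for $\mathcal{D}$ of size $m\le d$ is $l_iv_i$ ($i=1,\dots,m$), with $v_1,\dots,v_d$ the rows of a Haar-random orthogonal $d\times d$ matrix and $l_i$ i.i.d. copies of $\|\omega\|_2$ ($\omega\sim\mathcal{D}$) independent of the $v_i$. For general $s$, the (block-)orthogonal ensemble $\omega^{\mathrm{ort}}_1,\dots,\omega^{\mathrm{ort}}_s$ is obtained by partitioning the indices $1,\dots,s$ into consecutive blocks of size at most $d$, each block being an orthogonal ensemble, with different blocks independent. The i.i.d. ensemble $\omega^{\mathrm{iid}}_1,\dots,\omega^{\mathrm{iid}}_s$ consists of independent samples from $\mathcal{D}$. Estimators: $\widehat{F}^{\mathrm{iid}}_{f,\mathcal{D}}(\mathbf{z})=\frac1s\sum_{i=1}^s f((\omega^{\mathrm{iid}}_i)^\top\mathbf{z})$ and $\widehat{F}^{\mathrm{ort}}_{f,\mathcal{D}}(\mathbf{z})=\frac1s\sum_{i=1}^s f((\omega^{\mathrm{ort}}_i)^\top\mathbf{z})$. Class F1: $f(u)=g(|u|)$ with $g:[0,\infty)\to\mathbb{R}$ monotone (non-decreasing or non-increasing). *)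

theory Defs
  imports "HOL-Probability.Probability"
begin

definition isotropic :: "(real^'n) measure \<Rightarrow> bool" where
  "isotropic D \<longleftrightarrow>
     (\<forall>Q::real^'n^'n. orthogonal_matrix Q \<longrightarrow> distr D borel (\<lambda>w. Q *v w) = D)"

text \<open>H is the Haar (uniform) probability measure on the orthogonal group O(d):
  a probability measure concentrated on orthogonal matrices and invariant under
  left multiplication by orthogonal matrices (this characterises it uniquely).\<close>
definition haar_orthogonal :: "(real^'n^'n) measure \<Rightarrow> bool" where
  "haar_orthogonal H \<longleftrightarrow>
     prob_space H \<and> sets H = sets borel \<and> (AE M in H. orthogonal_matrix M) \<and>
     (\<forall>Q::real^'n^'n. orthogonal_matrix Q \<longrightarrow> distr H borel (\<lambda>M. Q ** M) = H)"

definition iid_ensemble :: "(real^'n) measure \<Rightarrow> nat \<Rightarrow> (nat \<Rightarrow> real^'n) measure" where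
  "iid_ensemble D s = PiM {..<s} (\<lambda>_. D)"

definition iid_estimator :: "(real \<Rightarrow> real) \<Rightarrow> nat \<Rightarrow> real^'n \<Rightarrow> (nat \<Rightarrow> real^'n) \<Rightarrow> real" where
  "iid_estimator f s z w = (1 / real s) * (\<Sum>i<s. f (w i \<bullet> z))"

text \<open>Block-orthogonal ensemble: the list bs gives the sizes of the consecutive blocks.
  Block b uses an independent Haar matrix M b and independent lengths l (b,j) distributed
  as the norm of a sample of D; its j-th sample is l (b,j) *R (row e j of M b),
  where e enumerates the row indices.\<close>
definition ort_ensemble :: "(real^'n) measure \<Rightarrow> (real^'n^'n) measure \<Rightarrow> nat list
    \<Rightarrow> ((nat \<Rightarrow> real^'n^'n) \<times> (nat \<times> nat \<Rightarrow> real)) measure" where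
  "ort_ensemble D H bs =
     PiM {..<length bs} (\<lambda>_. H) \<Otimes>\<^sub>M
     PiM (SIGMA b:{..<length bs}. {..<bs ! b}) (\<lambda>_. distr D borel norm)"

definition ort_estimator :: "(real \<Rightarrow> real) \<Rightarrow> (nat \<Rightarrow> 'n) \<Rightarrow> nat list \<Rightarrow> real^'n
    \<Rightarrow> (nat \<Rightarrow> real^'n^'n) \<times> (nat \<times> nat \<Rightarrow> real) \<Rightarrow> real" where
  "ort_estimator f e bs z x =
     (1 / real (sum_list bs)) *
     (\<Sum>b<length bs. \<Sum>j<bs ! b. f ((snd x (b, j) *\<^sub>R (fst x b $ e j)) \<bullet> z))"

end

theory Submission
  imports Defs
begin


lemma continuous_on_mv[continuous_intros]:
  fixes f :: "'a::topological_space \<Rightarrow> real^'m^'n" and g :: "'a \<Rightarrow> real^'m"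
  assumes "continuous_on S f" "continuous_on S g"
  shows "continuous_on S (\<lambda>x. f x *v g x)"
  unfolding matrix_vector_mult_def
  by (intro continuous_intros assms)

lemma continuous_on_mm[continuous_intros]:
  fixes f :: "'a::topological_space \<Rightarrow> real^'m^'n" and g :: "'a \<Rightarrow> real^'k^'m"
  assumes "continuous_on S f" "continuous_on S g"
  shows "continuous_on S (\<lambda>x. f x ** g x)"
  unfolding matrix_matrix_mult_def
  by (intro continuous_intros assms)

lemma measurable_mv[measurable (raw)]:
  fixes f :: "'a \<Rightarrow> real^'m^'n" and g :: "'a \<Rightarrow> real^'m"
  assumes "f \<in> borel_measurable M" "g \<in> borel_measurable M"
  shows "(\<lambda>x. f x *v g x) \<in> borel_measurable M"
proof -
  have c: "(\<lambda>p::(real^'m^'n) \<times> (real^'m). fst p *v snd p) \<in> borel_measurable borel"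
    by (intro borel_measurable_continuous_onI continuous_intros)
  have "(\<lambda>x. (f x, g x)) \<in> M \<rightarrow>\<^sub>M borel"
    using measurable_Pair[OF assms] by (simp add: borel_prod)
  from measurable_compose[OF this c] show ?thesis by simp
qed

lemma measurable_mm[measurable (raw)]:
  fixes f :: "'a \<Rightarrow> real^'m^'n" and g :: "'a \<Rightarrow> real^'k^'m"
  assumes "f \<in> borel_measurable M" "g \<in> borel_measurable M"
  shows "(\<lambda>x. f x ** g x) \<in> borel_measurable M"
proof -
  have c: "(\<lambda>p::(real^'m^'n) \<times> (real^'k^'m). fst p ** snd p) \<in> borel_measurable borel"
    by (intro borel_measurable_continuous_onI continuous_intros)
  have "(\<lambda>x. (f x, g x)) \<in> M \<rightarrow>\<^sub>M borel"
    using measurable_Pair[OF assms] by (simp add: borel_prod)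
  from measurable_compose[OF this c] show ?thesis by simp
qed

lemma measurable_vec_nth'[measurable (raw)]:
  fixes f :: "'a \<Rightarrow> 'b::real_normed_vector^'n"
  assumes "f \<in> borel_measurable M"
  shows "(\<lambda>x. f x $ i) \<in> borel_measurable M"
proof -
  have c: "(\<lambda>v::'b^'n. v $ i) \<in> borel_measurable borel"
    by (intro borel_measurable_continuous_onI continuous_intros continuous_on_id)
  from measurable_compose[OF assms c] show ?thesis by simp
qed

lemma measurable_transpose[measurable (raw)]:
  fixes f :: "'a \<Rightarrow> real^'m^'n"
  assumes "f \<in> borel_measurable M"
  shows "(\<lambda>x. transpose (f x)) \<in> borel_measurable M"
proof -
  have c: "(\<lambda>v::real^'m^'n. transpose v) \<in> borel_measurable borel"
    unfolding transpose_def
    by (intro borel_measurable_continuous_onI continuous_intros continuous_on_id)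
  from measurable_compose[OF assms c] show ?thesis by simp
qed



locale haar =
  fixes H :: "(real^'n::finite^'n) measure"
  assumes haar: "haar_orthogonal H"
begin

lemma prob: "prob_space H" and setsH: "sets H = sets borel"
  and AE_orth: "AE M in H. orthogonal_matrix M"
  and inv: "orthogonal_matrix Q \<Longrightarrow> distr H borel (\<lambda>M. Q ** M) = H"
  using haar unfolding haar_orthogonal_def by auto

lemma spaceH[simp]: "space H = UNIV"
  using sets_eq_imp_space_eq[OF setsH] by simp

lemma measH: "f \<in> borel_measurable borel \<Longrightarrow> f \<in> borel_measurable H"
  by (subst measurable_cong_sets[OF setsH refl])

lemma measHH: "f \<in> borel_measurable (borel \<Otimes>\<^sub>M borel) \<Longrightarrow> f \<in> borel_measurable (H \<Otimes>\<^sub>M H)"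
  by (subst measurable_cong_sets[OF sets_pair_measure_cong[OF setsH setsH] refl])

sublocale P: prob_space H by (rule prob)

lemma pair_H: "pair_sigma_finite H H"
  by (simp add: pair_sigma_finite.intro P.sigma_finite_measure_axioms)

lemma left_inv:
  fixes F :: "real^'n^'n \<Rightarrow> ennreal"
  assumes Q: "orthogonal_matrix Q" and F: "F \<in> borel_measurable borel"
  shows "(\<integral>\<^sup>+ M. F (Q ** M) \<partial>H) = integral\<^sup>N H F"
proof -
  have "integral\<^sup>N H F = integral\<^sup>N (distr H borel (\<lambda>M. Q ** M)) F"
    using inv[OF Q] by simp
  also have "\<dots> = (\<integral>\<^sup>+ M. F (Q ** M) \<partial>H)"
    by (rule nn_integral_distr) (auto simp: F intro!: measH)
  finally show ?thesis ..
qed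

lemma transpose_inv:
  fixes F :: "real^'n^'n \<Rightarrow> ennreal"
  assumes F[measurable]: "F \<in> borel_measurable borel"
  shows "(\<integral>\<^sup>+ M. F (transpose M) \<partial>H) = integral\<^sup>N H F"
proof -
  have m: "(\<lambda>(A, B). F (transpose A ** B)) \<in> borel_measurable (H \<Otimes>\<^sub>M H)"
  proof (rule measHH)
    have "(\<lambda>p::(real^'n^'n)\<times>(real^'n^'n). transpose (fst p) ** snd p) \<in> borel_measurable (borel \<Otimes>\<^sub>M borel)"
      by (intro measurable_mm measurable_transpose measurable_fst'' measurable_snd'' measurable_ident_sets refl)
    from measurable_compose[OF this F] show "(\<lambda>(A, B). F (transpose A ** B)) \<in> borel_measurable (borel \<Otimes>\<^sub>M borel)"
      by (simp add: case_prod_beta')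
  qed
  have "integral\<^sup>N H F = (\<integral>\<^sup>+ A. integral\<^sup>N H F \<partial>H)"
    using P.emeasure_space_1 by simp
  also have "\<dots> = (\<integral>\<^sup>+ A. \<integral>\<^sup>+ B. F (transpose A ** B) \<partial>H \<partial>H)"
    by (intro nn_integral_cong_AE, use AE_orth in eventually_elim)
       (use left_inv[of "transpose _" F] in auto)
  also have "\<dots> = (\<integral>\<^sup>+ B. \<integral>\<^sup>+ A. F (transpose A ** B) \<partial>H \<partial>H)"
    using pair_sigma_finite.Fubini'[OF pair_H m] by simp
  also have "\<dots> = (\<integral>\<^sup>+ B. \<integral>\<^sup>+ A. F (transpose A) \<partial>H \<partial>H)"
  proof (intro nn_integral_cong_AE, use AE_orth in eventually_elim)
    fix B :: "real^'n^'n" assume B: "orthogonal_matrix B"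
    have "(\<integral>\<^sup>+ A. F (transpose A ** B) \<partial>H) = (\<integral>\<^sup>+ A. F (transpose (transpose B ** A)) \<partial>H)"
      by (simp add: matrix_transpose_mul)
    also have "\<dots> = (\<integral>\<^sup>+ A. F (transpose A) \<partial>H)"
      using left_inv[of "transpose B" "\<lambda>A. F (transpose A)"] B by simp
    finally show "(\<integral>\<^sup>+ A. F (transpose A ** B) \<partial>H) = (\<integral>\<^sup>+ A. F (transpose A) \<partial>H)" .
  qed
  also have "\<dots> = (\<integral>\<^sup>+ A. F (transpose A) \<partial>H)"
    using P.emeasure_space_1 by simp
  finally show ?thesis ..
qed

lemma right_inv:
  fixes F :: "real^'n^'n \<Rightarrow> ennreal"
  assumes Q: "orthogonal_matrix Q" and F[measurable]: "F \<in> borel_measurable borel"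
  shows "(\<integral>\<^sup>+ M. F (M ** Q) \<partial>H) = integral\<^sup>N H F"
proof -
  have "(\<integral>\<^sup>+ M. F (M ** Q) \<partial>H) = (\<integral>\<^sup>+ M. F (transpose M ** Q) \<partial>H)"
    using transpose_inv[of "\<lambda>M. F (transpose M ** Q)"] by simp
  also have "\<dots> = (\<integral>\<^sup>+ M. F (transpose (transpose Q ** M)) \<partial>H)"
    by (simp add: matrix_transpose_mul)
  also have "\<dots> = (\<integral>\<^sup>+ M. F (transpose M) \<partial>H)"
    using left_inv[of "transpose Q" "\<lambda>A. F (transpose A)"] Q by simp
  also have "\<dots> = integral\<^sup>N H F" by (rule transpose_inv[OF F])
  finally show ?thesis .
qed

end


definition hh :: "real^'n::finite \<Rightarrow> real^'n \<Rightarrow> real^'n" where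
  "hh w x = (if w = 0 then x else x - (2 * (w \<bullet> x) / (w \<bullet> w)) *\<^sub>R w)"

lemma hh_linear: "linear (hh w)"
  unfolding hh_def
  by (cases "w = 0") (auto intro!: linearI simp: inner_add_right inner_scaleR_right algebra_simps add_divide_distrib)

lemma hh_inner: "hh w x \<bullet> hh w y = x \<bullet> y"
proof (cases "w = 0")
  case False
  then have ww: "w \<bullet> w \<noteq> 0" by simp
  show ?thesis using ww unfolding hh_def
    by (simp add: False inner_diff_left inner_diff_right inner_commute field_simps)
qed (simp add: hh_def)

lemma hh_orth: "orthogonal_transformation (hh w)"
  unfolding orthogonal_transformation_def using hh_linear hh_inner by blast

lemma hh_fix: "w \<bullet> x = 0 \<Longrightarrow> hh w x = x"
  by (simp add: hh_def)

lemma hh_swap: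
  assumes "norm a = norm b"
  shows "hh (a - b) a = b"
proof (cases "a = b")
  case False
  have nn: "a \<bullet> a = b \<bullet> b" using assms by (simp add: dot_square_norm)
  have w: "(a - b) \<bullet> (a - b) = 2 * ((a - b) \<bullet> a)"
    using nn by (simp add: inner_diff_left inner_diff_right inner_commute)
  have ne: "(a - b) \<bullet> (a - b) \<noteq> 0" using False by simp
  have c: "2 * ((a - b) \<bullet> a) / ((a - b) \<bullet> (a - b)) = 1"
    using w ne by (metis divide_self)
  have "a - b \<noteq> 0" using False by simp
  then have "hh (a - b) a = a - (2 * ((a - b) \<bullet> a) / ((a - b) \<bullet> (a - b))) *\<^sub>R (a - b)"
    by (simp add: hh_def)
  then show ?thesis using c by simp
qed (simp add: hh_def)

lemma measurable_hh[measurable (raw)]: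
  fixes w x :: "'a \<Rightarrow> real^'n::finite"
  assumes [measurable]: "w \<in> borel_measurable M" "x \<in> borel_measurable M"
  shows "(\<lambda>y. hh (w y) (x y)) \<in> borel_measurable M"
  unfolding hh_def by measurable


lemma orth_mv: "orthogonal_matrix (N::real^'n::finite^'n) \<Longrightarrow> orthogonal_transformation (\<lambda>x. N *v x)"
  using orthogonal_transformation_matrix[of "\<lambda>x. N *v x"] matrix_of_matrix_vector_mul[of N]
    matrix_vector_mul_linear[of N] by simp

lemma orth_trans_inner: "orthogonal_transformation f \<Longrightarrow> f x \<bullet> f y = x \<bullet> y"
  by (simp add: orthogonal_transformation_def)

lemma orth_trans_norm: "orthogonal_transformation f \<Longrightarrow> norm (f x) = norm x"
  by (simp add: orthogonal_transformation_norm)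

lemma orth_trans_matrix:
  fixes f :: "real^'n::finite \<Rightarrow> real^'n"
  assumes "orthogonal_transformation f"
  shows "orthogonal_matrix (matrix f)" "\<And>x. matrix f *v x = f x"
  using assms orthogonal_transformation_matrix[of f] matrix_works[of f] linear_linear[of f]
  by (auto simp: orthogonal_transformation_def)

definition Rn :: "'n::finite \<Rightarrow> real^'n^'n \<Rightarrow> real^'n \<Rightarrow> real^'n" where
  "Rn m N x = hh (N *v axis m 1 - axis m 1) (N *v x)"

lemma Rn_orth: "orthogonal_matrix N \<Longrightarrow> orthogonal_transformation (Rn m N)"
proof -
  assume N: "orthogonal_matrix N"
  have "Rn m N = hh (N *v axis m 1 - axis m 1) \<circ> (\<lambda>x. N *v x)"
    by (auto simp: Rn_def)
  then show ?thesis
    using orthogonal_transformation_compose[OF hh_orth orth_mv[OF N]] by simp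
qed

lemma Rn_fix: "orthogonal_matrix N \<Longrightarrow> Rn m N (axis m 1) = axis m 1"
  unfolding Rn_def
  by (rule hh_swap) (simp add: orth_trans_norm[OF orth_mv])

lemma Rn_comp: "Q *v axis m 1 = axis m 1 \<Longrightarrow> Rn m (N ** Q) x = Rn m N (Q *v x)"
  by (simp add: Rn_def matrix_vector_mul_assoc[symmetric])

lemma Rn_coord:
  assumes N: "orthogonal_matrix N"
  shows "Rn m N x $ m = x $ m"
proof -
  have "Rn m N x $ m = Rn m N x \<bullet> Rn m N (axis m 1)"
    by (simp add: Rn_fix[OF N] cart_eq_inner_axis)
  also have "\<dots> = x \<bullet> axis m 1" by (rule orth_trans_inner[OF Rn_orth[OF N]])
  finally show ?thesis by (simp add: cart_eq_inner_axis)
qed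

lemma measurable_Rn[measurable (raw)]:
  fixes N :: "'a \<Rightarrow> real^'n::finite^'n" and x :: "'a \<Rightarrow> real^'n"
  assumes [measurable]: "N \<in> borel_measurable M" "x \<in> borel_measurable M"
  shows "(\<lambda>y. Rn m (N y) (x y)) \<in> borel_measurable M"
  unfolding Rn_def by measurable


context haar begin

lemma avg_transitive:
  fixes F :: "real^'n \<Rightarrow> ennreal"
  assumes F[measurable]: "F \<in> borel_measurable borel"
    and eqm: "u $ m = v $ m" and eqn: "norm u = norm v"
  shows "(\<integral>\<^sup>+ N. F (Rn m N u) \<partial>H) = (\<integral>\<^sup>+ N. F (Rn m N v) \<partial>H)"
proof -
  define Q where "Q = matrix (hh (v - u))"
  have Qo: "orthogonal_matrix Q" and Qa: "\<And>x. Q *v x = hh (v - u) x"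
    using orth_trans_matrix[OF hh_orth] unfolding Q_def by auto
  have Qe: "Q *v axis m 1 = axis m 1"
    using eqm by (simp add: Qa hh_fix inner_diff_left inner_axis)
  have Qv: "Q *v v = u" using eqn by (simp add: Qa hh_swap)
  have "(\<integral>\<^sup>+ N. F (Rn m N v) \<partial>H) = (\<integral>\<^sup>+ N. F (Rn m (N ** Q) v) \<partial>H)"
    using right_inv[OF Qo, of "\<lambda>N. F (Rn m N v)"] by simp
  also have "\<dots> = (\<integral>\<^sup>+ N. F (Rn m N u) \<partial>H)"
    by (simp add: Rn_comp[OF Qe] Qv)
  finally show ?thesis ..
qed

lemma averaging:
  fixes F :: "real^'n \<Rightarrow> ennreal"
  assumes F[measurable]: "F \<in> borel_measurable borel"
  shows "(\<integral>\<^sup>+ M. F (M *v z) \<partial>H) = (\<integral>\<^sup>+ M. \<integral>\<^sup>+ N. F (Rn m N (M *v z)) \<partial>H \<partial>H)"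
proof -
  have m: "(\<lambda>(M, N). F (Rn m N (M *v z))) \<in> borel_measurable (H \<Otimes>\<^sub>M H)"
    by (rule measHH) measurable
  have "(\<integral>\<^sup>+ M. \<integral>\<^sup>+ N. F (Rn m N (M *v z)) \<partial>H \<partial>H) = (\<integral>\<^sup>+ N. \<integral>\<^sup>+ M. F (Rn m N (M *v z)) \<partial>H \<partial>H)"
    using pair_sigma_finite.Fubini'[OF pair_H m] by simp
  also have "\<dots> = (\<integral>\<^sup>+ N. \<integral>\<^sup>+ M. F (M *v z) \<partial>H \<partial>H)"
  proof (intro nn_integral_cong_AE, use AE_orth in eventually_elim)
    fix N :: "real^'n^'n" assume N: "orthogonal_matrix N"
    note R = orth_trans_matrix[OF Rn_orth[OF N, of m]]
    have "(\<integral>\<^sup>+ M. F (Rn m N (M *v z)) \<partial>H) = (\<integral>\<^sup>+ M. F ((matrix (Rn m N) ** M) *v z) \<partial>H)"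
      by (simp add: matrix_vector_mul_assoc[symmetric] R(2))
    also have "\<dots> = (\<integral>\<^sup>+ M. F (M *v z) \<partial>H)"
      by (rule left_inv[OF R(1), of "\<lambda>M. F (M *v z)"]) measurable
    finally show "(\<integral>\<^sup>+ M. F (Rn m N (M *v z)) \<partial>H) = (\<integral>\<^sup>+ M. F (M *v z) \<partial>H)" .
  qed
  also have "\<dots> = (\<integral>\<^sup>+ M. F (M *v z) \<partial>H)"
    using P.emeasure_space_1 by simp
  finally show ?thesis ..
qed

end


lemma ennreal_half_le: "(A::ennreal) + A \<le> B + B \<Longrightarrow> A \<le> B"
proof -
  assume h: "A + A \<le> B + B"
  have "2 * A \<le> 2 * B" using h by (simp add: mult_2)
  then show "A \<le> B"
    using ennreal_mult_le_mult_iff[of 2 A B] by simp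
qed

lemma chebyshev_ennreal:
  fixes X :: "'a \<Rightarrow> real" and a b :: "real \<Rightarrow> ennreal"
  assumes P: "prob_space P" and X[measurable]: "X \<in> borel_measurable P"
    and a[measurable]: "a \<in> borel_measurable borel" and b[measurable]: "b \<in> borel_measurable borel"
    and ab: "\<And>x y. a x * b x + a y * b y \<le> a x * b y + a y * b x"
  shows "(\<integral>\<^sup>+ w. a (X w) * b (X w) \<partial>P) \<le> (\<integral>\<^sup>+ w. a (X w) \<partial>P) * (\<integral>\<^sup>+ w. b (X w) \<partial>P)"
proof -
  interpret prob_space P by (rule P)
  define A where "A = (\<integral>\<^sup>+ w. a (X w) * b (X w) \<partial>P)"
  define A1 where "A1 = (\<integral>\<^sup>+ w. a (X w) \<partial>P)"
  define B1 where "B1 = (\<integral>\<^sup>+ w. b (X w) \<partial>P)"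
  have "A + A = (\<integral>\<^sup>+ v. (\<integral>\<^sup>+ w. a (X w) * b (X w) + a (X v) * b (X v) \<partial>P) \<partial>P)"
  proof -
    have "\<And>v. (\<integral>\<^sup>+ w. a (X w) * b (X w) + a (X v) * b (X v) \<partial>P) = A + a (X v) * b (X v)"
      unfolding A_def by (subst nn_integral_add) (auto simp: emeasure_space_1)
    then have "(\<integral>\<^sup>+ v. (\<integral>\<^sup>+ w. a (X w) * b (X w) + a (X v) * b (X v) \<partial>P) \<partial>P)
        = (\<integral>\<^sup>+ v. A + a (X v) * b (X v) \<partial>P)" by simp
    also have "\<dots> = A + A"
      unfolding A_def by (subst nn_integral_add) (auto simp: emeasure_space_1)
    finally show ?thesis ..
  qed
  also have "\<dots> \<le> (\<integral>\<^sup>+ v. (\<integral>\<^sup>+ w. a (X w) * b (X v) + a (X v) * b (X w) \<partial>P) \<partial>P)"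
    by (intro nn_integral_mono ab)
  also have "\<dots> = A1 * B1 + A1 * B1"
  proof -
    have "\<And>v. (\<integral>\<^sup>+ w. a (X w) * b (X v) + a (X v) * b (X w) \<partial>P) = A1 * b (X v) + a (X v) * B1"
      unfolding A1_def B1_def
      by (subst nn_integral_add) (auto simp: nn_integral_multc nn_integral_cmult)
    then have "(\<integral>\<^sup>+ v. (\<integral>\<^sup>+ w. a (X w) * b (X v) + a (X v) * b (X w) \<partial>P) \<partial>P)
        = (\<integral>\<^sup>+ v. A1 * b (X v) + a (X v) * B1 \<partial>P)" by simp
    also have "\<dots> = A1 * B1 + A1 * B1"
      unfolding A1_def B1_def
      by (subst nn_integral_add) (auto simp: nn_integral_multc nn_integral_cmult mult.commute)
    finally show ?thesis .
  qed
  finally show ?thesis unfolding A_def A1_def B1_def by (rule ennreal_half_le)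
qed


lemma cheb_pair: "(p::ennreal) \<le> q \<Longrightarrow> s \<le> r \<Longrightarrow> p * r + q * s \<le> p * s + q * r"
proof -
  assume "p \<le> q" "s \<le> r"
  then obtain d e where q: "q = p + d" and r: "r = s + e" by (auto simp: le_iff_add)
  show ?thesis unfolding q r by (simp add: algebra_simps add.assoc)
qed

lemma rho_sq:
  fixes x :: "real^'n::finite"
  shows "norm (x - x $ m *\<^sub>R axis m 1)^2 = x \<bullet> x - (x $ m)^2"
  unfolding power2_norm_eq_inner
  by (simp add: inner_diff_left inner_diff_right inner_axis inner_axis' inner_commute power2_eq_square)

lemma rho_eq:
  fixes x :: "real^'n::finite"
  shows "norm (x - x $ m *\<^sub>R axis m 1) = sqrt (x \<bullet> x - (x $ m)^2)"
  by (metis norm_ge_zero real_sqrt_unique rho_sq)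

lemma measBH: "f \<in> borel_measurable (borel \<Otimes>\<^sub>M borel) \<Longrightarrow> sets H = sets borel \<Longrightarrow> f \<in> borel_measurable (borel \<Otimes>\<^sub>M H)"
  by (subst measurable_cong_sets[OF sets_pair_measure_cong[OF refl] refl]) auto

definition mono_dir :: "(real \<Rightarrow> ennreal) \<Rightarrow> bool" where
  "mono_dir \<phi> \<longleftrightarrow> (\<forall>x y. 0 \<le> x \<longrightarrow> x \<le> y \<longrightarrow> \<phi> x \<le> \<phi> y) \<or> (\<forall>x y. 0 \<le> x \<longrightarrow> x \<le> y \<longrightarrow> \<phi> y \<le> \<phi> x)"

context haar begin

lemma AE_norm: "AE M in H. norm (M *v z) = norm z"
  using AE_orth by eventually_elim (simp add: orth_trans_norm[OF orth_mv])


lemma key: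
  fixes \<phi> :: "real \<Rightarrow> ennreal"
  assumes phim[measurable]: "\<phi> \<in> borel_measurable borel" and md: "mono_dir \<phi>" and S: "finite S"
  shows "(\<integral>\<^sup>+ M. (\<Prod>k\<in>S. \<phi> \<bar>(M *v z) $ k\<bar>) \<partial>H) \<le> (\<Prod>k\<in>S. \<integral>\<^sup>+ M. \<phi> \<bar>(M *v z) $ k\<bar> \<partial>H)"
  using S
proof (induction S rule: finite_induct)
  case empty
  then show ?case using P.emeasure_space_1 by simp
next
  case (insert m S)
  define Psi where "Psi = (\<lambda>x::real^'n. \<Prod>k\<in>S. \<phi> \<bar>x $ k\<bar>)"
  have Psim[measurable]: "Psi \<in> borel_measurable borel" unfolding Psi_def by measurable
  have IH: "(\<integral>\<^sup>+ M. Psi (M *v z) \<partial>H) \<le> (\<Prod>k\<in>S. \<integral>\<^sup>+ M. \<phi> \<bar>(M *v z) $ k\<bar> \<partial>H)"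
    using insert.IH unfolding Psi_def .
  have lhs: "(\<integral>\<^sup>+ M. (\<Prod>k\<in>insert m S. \<phi> \<bar>(M *v z) $ k\<bar>) \<partial>H) = (\<integral>\<^sup>+ M. \<phi> \<bar>(M *v z) $ m\<bar> * Psi (M *v z) \<partial>H)"
    using insert by (simp add: Psi_def)
  show ?case
  proof (cases "S = {}")
    case True
    then show ?thesis using lhs by (simp add: Psi_def)
  next
    case False
    then obtain k0 where k0: "k0 \<in> S" by auto
    have k0m: "k0 \<noteq> m" using k0 insert by auto
    define w0 :: "real^'n" where "w0 = axis k0 1"
    define G where "G = (\<lambda>r::real. \<integral>\<^sup>+ N. (\<Prod>k\<in>S. \<phi> \<bar>r * (Rn m N w0) $ k\<bar>) \<partial>H)"
    have Gm[measurable]: "G \<in> borel_measurable borel"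
      unfolding G_def
      by (rule P.borel_measurable_nn_integral, rule measBH[OF _ setsH]) measurable
    define rho where "rho = (\<lambda>x::real^'n. norm (x - x $ m *\<^sub>R axis m 1))"
    have trans: "(\<integral>\<^sup>+ N. Psi (Rn m N x) \<partial>H) = G (rho x)" for x
    proof -
      define v where "v = x $ m *\<^sub>R axis m 1 + rho x *\<^sub>R w0"
      have vm: "v $ m = x $ m" using k0m by (simp add: v_def w0_def axis_def)
      have "v \<bullet> v = (x $ m)^2 + (rho x)^2"
        using k0m by (simp add: v_def w0_def inner_add_left inner_add_right inner_axis_axis power2_eq_square)
      also have "\<dots> = x \<bullet> x" using rho_sq[of x m] by (simp add: rho_def)
      finally have vn: "norm v = norm x" by (simp add: norm_eq_sqrt_inner)
      have "(\<integral>\<^sup>+ N. Psi (Rn m N x) \<partial>H) = (\<integral>\<^sup>+ N. Psi (Rn m N v) \<partial>H)"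
        by (rule avg_transitive[OF Psim]) (use vm vn in auto)
      also have "\<dots> = G (rho x)" unfolding G_def
      proof (intro nn_integral_cong_AE, use AE_orth in eventually_elim)
        fix N :: "real^'n^'n" assume N: "orthogonal_matrix N"
        have lin: "linear (Rn m N)" using Rn_orth[OF N] by (simp add: orthogonal_transformation_def)
        have "Rn m N v = x $ m *\<^sub>R axis m 1 + rho x *\<^sub>R Rn m N w0"
          by (simp add: v_def linear_add[OF lin] linear_scale[OF lin] Rn_fix[OF N])
        then show "Psi (Rn m N v) = (\<Prod>k\<in>S. \<phi> \<bar>rho x * (Rn m N w0) $ k\<bar>)"
          unfolding Psi_def using insert(2) by (intro prod.cong) (auto simp: axis_def)
      qed
      finally show ?thesis .
    qed
    define incr where "incr = (\<forall>x y. 0 \<le> x \<longrightarrow> x \<le> y \<longrightarrow> \<phi> x \<le> \<phi> y)"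
    define decr where "decr = (\<forall>x y. 0 \<le> x \<longrightarrow> x \<le> y \<longrightarrow> \<phi> y \<le> \<phi> x)"
    have id: "incr \<or> decr" using md unfolding mono_dir_def incr_def decr_def .
    have Gmono: "(incr \<longrightarrow> G r1 \<le> G r2) \<and> (decr \<longrightarrow> G r2 \<le> G r1)" if "0 \<le> r1" "r1 \<le> r2" for r1 r2
    proof -
      have le: "\<bar>r1 * c\<bar> \<le> \<bar>r2 * c\<bar>" for c
        using that by (simp add: abs_mult mult_right_mono)
      show ?thesis unfolding G_def incr_def decr_def
        using le by (auto intro!: nn_integral_mono prod_mono_ennreal)
    qed
    define r where "r = norm z"
    define a where "a = (\<lambda>t::real. \<phi> \<bar>t\<bar>)"
    define b where "b = (\<lambda>t::real. G (sqrt (max 0 (r^2 - t^2))))"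
    have am[measurable]: "a \<in> borel_measurable borel" unfolding a_def by measurable
    have bm[measurable]: "b \<in> borel_measurable borel" unfolding b_def by measurable
    have pw: "a x * b x + a y * b y \<le> a x * b y + a y * b x" if "\<bar>x\<bar> \<le> \<bar>y\<bar>" for x y
    proof -
      have xy: "x^2 \<le> y^2" using that by (simp add: abs_le_square_iff)
      have s: "sqrt (max 0 (r^2 - y^2)) \<le> sqrt (max 0 (r^2 - x^2))"
        using xy by (simp add: max_def)
      have s0: "0 \<le> sqrt (max 0 (r^2 - y^2))" by simp
      show ?thesis using id
      proof
        assume inc: incr
        have "a x \<le> a y" using inc that unfolding incr_def a_def by auto
        moreover have "b y \<le> b x" using Gmono[OF s0 s] inc unfolding b_def by auto
        ultimately show ?thesis using cheb_pair[of "a x" "a y" "b y" "b x"] by simp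
      next
        assume dec: decr
        have "a y \<le> a x" using dec that unfolding decr_def a_def by auto
        moreover have "b x \<le> b y" using Gmono[OF s0 s] dec unfolding b_def by auto
        ultimately show ?thesis using cheb_pair[of "a y" "a x" "b x" "b y"] by (simp add: add.commute)
      qed
    qed
    have pw2: "a x * b x + a y * b y \<le> a x * b y + a y * b x" for x y
    proof (cases "\<bar>x\<bar> \<le> \<bar>y\<bar>")
      case True then show ?thesis by (rule pw)
    next
      case False
      then have "a y * b y + a x * b x \<le> a y * b x + a x * b y" using pw[of y x] by simp
      then show ?thesis by (simp add: add.commute)
    qed
    have step1: "(\<integral>\<^sup>+ M. \<phi> \<bar>(M *v z) $ m\<bar> * Psi (M *v z) \<partial>H)
        = (\<integral>\<^sup>+ M. \<integral>\<^sup>+ N. \<phi> \<bar>(Rn m N (M *v z)) $ m\<bar> * Psi (Rn m N (M *v z)) \<partial>H \<partial>H)"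
      by (rule averaging[of "\<lambda>x. \<phi> \<bar>x $ m\<bar> * Psi x"]) measurable
    also have "\<dots> = (\<integral>\<^sup>+ M. a ((M *v z) $ m) * b ((M *v z) $ m) \<partial>H)"
    proof (intro nn_integral_cong_AE, use AE_norm[of z] in eventually_elim)
      fix M :: "real^'n^'n" assume nM: "norm (M *v z) = norm z"
      define u where "u = M *v z"
      have "(\<integral>\<^sup>+ N. \<phi> \<bar>(Rn m N u) $ m\<bar> * Psi (Rn m N u) \<partial>H) = (\<integral>\<^sup>+ N. \<phi> \<bar>u $ m\<bar> * Psi (Rn m N u) \<partial>H)"
        by (intro nn_integral_cong_AE, use AE_orth in eventually_elim) (simp add: Rn_coord)
      also have "\<dots> = \<phi> \<bar>u $ m\<bar> * (\<integral>\<^sup>+ N. Psi (Rn m N u) \<partial>H)"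
        by (rule nn_integral_cmult) (rule measH, measurable)
      also have "\<dots> = \<phi> \<bar>u $ m\<bar> * G (rho u)" by (simp add: trans)
      also have "rho u = sqrt (max 0 (r^2 - (u $ m)^2))"
      proof -
        have "u \<bullet> u = r^2" using nM by (metis power2_norm_eq_inner r_def u_def)
        moreover have "0 \<le> u \<bullet> u - (u $ m)^2" using rho_sq[of u m] by (metis zero_le_power2)
        ultimately show ?thesis by (simp add: rho_def rho_eq)
      qed
      finally show "(\<integral>\<^sup>+ N. \<phi> \<bar>(Rn m N (M *v z)) $ m\<bar> * Psi (Rn m N (M *v z)) \<partial>H) = a ((M *v z) $ m) * b ((M *v z) $ m)"
        by (simp add: u_def a_def b_def)
    qed
    also have "\<dots> \<le> (\<integral>\<^sup>+ M. a ((M *v z) $ m) \<partial>H) * (\<integral>\<^sup>+ M. b ((M *v z) $ m) \<partial>H)"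
      by (rule chebyshev_ennreal[OF prob _ am bm pw2]) (rule measH, measurable)
    also have "(\<integral>\<^sup>+ M. b ((M *v z) $ m) \<partial>H) = (\<integral>\<^sup>+ M. Psi (M *v z) \<partial>H)"
    proof -
      have "(\<integral>\<^sup>+ M. Psi (M *v z) \<partial>H) = (\<integral>\<^sup>+ M. \<integral>\<^sup>+ N. Psi (Rn m N (M *v z)) \<partial>H \<partial>H)"
        by (rule averaging[OF Psim])
      also have "\<dots> = (\<integral>\<^sup>+ M. b ((M *v z) $ m) \<partial>H)"
      proof (intro nn_integral_cong_AE, use AE_norm[of z] in eventually_elim)
        fix M :: "real^'n^'n" assume nM: "norm (M *v z) = norm z"
        define u where "u = M *v z"
        have "rho u = sqrt (max 0 (r^2 - (u $ m)^2))"
        proof -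
          have "u \<bullet> u = r^2" using nM by (metis power2_norm_eq_inner r_def u_def)
          moreover have "0 \<le> u \<bullet> u - (u $ m)^2" using rho_sq[of u m] by (metis zero_le_power2)
          ultimately show ?thesis by (simp add: rho_def rho_eq)
        qed
        then show "(\<integral>\<^sup>+ N. Psi (Rn m N (M *v z)) \<partial>H) = b ((M *v z) $ m)"
          by (simp add: trans u_def b_def)
      qed
      finally show ?thesis ..
    qed
    also have "(\<integral>\<^sup>+ M. a ((M *v z) $ m) \<partial>H) * (\<integral>\<^sup>+ M. Psi (M *v z) \<partial>H)
        \<le> (\<integral>\<^sup>+ M. a ((M *v z) $ m) \<partial>H) * (\<Prod>k\<in>S. \<integral>\<^sup>+ M. \<phi> \<bar>(M *v z) $ k\<bar> \<partial>H)"
      by (rule mult_left_mono[OF IH]) simp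
    also have "\<dots> = (\<Prod>k\<in>insert m S. \<integral>\<^sup>+ M. \<phi> \<bar>(M *v z) $ k\<bar> \<partial>H)"
      using insert by (simp add: a_def)
    finally show ?thesis using lhs by simp
  qed
qed

end


lemma transpose_dot: "(transpose A *v x) \<bullet> y = x \<bullet> (A *v (y::real^'n::finite))"
  using vector_transpose_matrix[of x "transpose A"] dot_lmul_matrix[of x A y]
  by (simp add: transpose_transpose)

locale haar_iso = haar H for H :: "(real^'n::finite^'n) measure" +
  fixes D :: "(real^'n) measure"
  assumes probD: "prob_space D" and setsD: "sets D = sets borel" and iso: "isotropic D"
begin

sublocale PD: prob_space D by (rule probD)

lemma spaceD[simp]: "space D = UNIV"
  using sets_eq_imp_space_eq[OF setsD] by simp

lemma measD: "f \<in> borel_measurable borel \<Longrightarrow> f \<in> borel_measurable D"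
  by (subst measurable_cong_sets[OF setsD refl])

lemma measHD: "f \<in> borel_measurable (borel \<Otimes>\<^sub>M borel) \<Longrightarrow> f \<in> borel_measurable (H \<Otimes>\<^sub>M D)"
  by (subst measurable_cong_sets[OF sets_pair_measure_cong[OF setsH setsD] refl])

lemma pair_HD: "pair_sigma_finite H D"
  by (simp add: pair_sigma_finite.intro P.sigma_finite_measure_axioms PD.sigma_finite_measure_axioms)

lemma iso_inv:
  fixes F :: "real^'n \<Rightarrow> ennreal"
  assumes Q: "orthogonal_matrix Q" and F: "F \<in> borel_measurable borel"
  shows "(\<integral>\<^sup>+ w. F (Q *v w) \<partial>D) = integral\<^sup>N D F"
proof -
  have "integral\<^sup>N D F = integral\<^sup>N (distr D borel (\<lambda>w. Q *v w)) F"
    using iso Q unfolding isotropic_def by simp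
  also have "\<dots> = (\<integral>\<^sup>+ w. F (Q *v w) \<partial>D)"
    by (rule nn_integral_distr) (auto simp: F intro!: measD)
  finally show ?thesis ..
qed

lemma marginal:
  fixes E :: "real \<Rightarrow> ennreal"
  assumes E[measurable]: "E \<in> borel_measurable borel"
  shows "(\<integral>\<^sup>+ M. (\<integral>\<^sup>+ w. E (norm w * \<bar>(M *v z) $ k\<bar>) \<partial>D) \<partial>H) = (\<integral>\<^sup>+ w. E \<bar>w \<bullet> z\<bar> \<partial>D)"
proof -
  have m1: "(\<lambda>(M, w). E \<bar>(transpose M *v w) \<bullet> z\<bar>) \<in> borel_measurable (H \<Otimes>\<^sub>M D)"
    by (rule measHD) measurable
  have m2: "(\<lambda>(M, w). E (norm w * \<bar>(M *v z) $ k\<bar>)) \<in> borel_measurable (H \<Otimes>\<^sub>M D)"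
    by (rule measHD) measurable
  have "(\<integral>\<^sup>+ w. E \<bar>w \<bullet> z\<bar> \<partial>D) = (\<integral>\<^sup>+ M. (\<integral>\<^sup>+ w. E \<bar>w \<bullet> z\<bar> \<partial>D) \<partial>H)"
    using P.emeasure_space_1 by simp
  also have "\<dots> = (\<integral>\<^sup>+ M. (\<integral>\<^sup>+ w. E \<bar>(transpose M *v w) \<bullet> z\<bar> \<partial>D) \<partial>H)"
  proof (intro nn_integral_cong_AE, use AE_orth in eventually_elim)
    fix M :: "real^'n^'n" assume "orthogonal_matrix M"
    then show "(\<integral>\<^sup>+ w. E \<bar>w \<bullet> z\<bar> \<partial>D) = (\<integral>\<^sup>+ w. E \<bar>(transpose M *v w) \<bullet> z\<bar> \<partial>D)"
      using iso_inv[of "transpose M" "\<lambda>w. E \<bar>w \<bullet> z\<bar>"] by simp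
  qed
  also have "\<dots> = (\<integral>\<^sup>+ w. (\<integral>\<^sup>+ M. E \<bar>(transpose M *v w) \<bullet> z\<bar> \<partial>H) \<partial>D)"
    using pair_sigma_finite.Fubini'[OF pair_HD m1] by simp
  also have "\<dots> = (\<integral>\<^sup>+ w. (\<integral>\<^sup>+ M. E (norm w * \<bar>(M *v z) $ k\<bar>) \<partial>H) \<partial>D)"
  proof (rule nn_integral_cong)
    fix w :: "real^'n"
    define a where "a = norm w *\<^sub>R (axis k 1 :: real^'n)"
    have "norm a = norm w" by (simp add: a_def)
    then obtain f where f: "orthogonal_transformation f" "f a = w"
      using orthogonal_transformation_exists by metis
    define Q where "Q = matrix f"
    have Qo: "orthogonal_matrix Q" and Qa: "Q *v a = w"
      using orth_trans_matrix[OF f(1)] f(2) by (auto simp: Q_def)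
    have eq: "(transpose M *v w) \<bullet> z = a \<bullet> ((transpose Q ** M) *v z)" for M
    proof -
      have "(transpose M *v w) \<bullet> z = w \<bullet> (M *v z)" by (rule transpose_dot)
      also have "\<dots> = (transpose (transpose Q) *v a) \<bullet> (M *v z)" by (simp add: Qa transpose_transpose)
      also have "\<dots> = a \<bullet> (transpose Q *v (M *v z))" by (rule transpose_dot)
      finally show ?thesis by (simp add: matrix_vector_mul_assoc)
    qed
    have "(\<integral>\<^sup>+ M. E \<bar>(transpose M *v w) \<bullet> z\<bar> \<partial>H) = (\<integral>\<^sup>+ M. E \<bar>a \<bullet> ((transpose Q ** M) *v z)\<bar> \<partial>H)"
      by (simp only: eq)
    also have "\<dots> = (\<integral>\<^sup>+ M. E \<bar>a \<bullet> (M *v z)\<bar> \<partial>H)"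
      by (rule left_inv[of "transpose Q" "\<lambda>M. E \<bar>a \<bullet> (M *v z)\<bar>"]) (use Qo in auto)
    also have "\<dots> = (\<integral>\<^sup>+ M. E (norm w * \<bar>(M *v z) $ k\<bar>) \<partial>H)"
      by (simp add: a_def inner_axis' abs_mult)
    finally show "(\<integral>\<^sup>+ M. E \<bar>(transpose M *v w) \<bullet> z\<bar> \<partial>H) = (\<integral>\<^sup>+ M. E (norm w * \<bar>(M *v z) $ k\<bar>) \<partial>H)" .
  qed
  also have "\<dots> = (\<integral>\<^sup>+ M. (\<integral>\<^sup>+ w. E (norm w * \<bar>(M *v z) $ k\<bar>) \<partial>D) \<partial>H)"
    using pair_sigma_finite.Fubini'[OF pair_HD m2] by simp
  finally show ?thesis ..
qed

end


lemma mv_nth: "(M *v z) $ i = M $ i \<bullet> (z::real^'n::finite)"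
  by (simp add: matrix_vector_mult_def inner_vec_def mult.commute)

lemma exp_prod_ennreal: "finite I \<Longrightarrow> ennreal (exp (\<Sum>i\<in>I. h i)) = (\<Prod>i\<in>I. ennreal (exp (h i)))"
  by (simp add: exp_sum prod_ennreal)

lemma gmonoD: "mono_on {0..} g \<Longrightarrow> 0 \<le> x \<Longrightarrow> x \<le> y \<Longrightarrow> (g::real\<Rightarrow>real) x \<le> g y"
  using monotone_onD[of "{0..}" "(\<le>)" "(\<le>)" g x y] by auto

lemma gantiD: "antimono_on {0..} g \<Longrightarrow> 0 \<le> x \<Longrightarrow> x \<le> y \<Longrightarrow> (g::real\<Rightarrow>real) y \<le> g x"
  using monotone_onD[of "{0..}" "(\<le>)" "\<lambda>x y. y \<le> x" g x y] by auto

lemma mono_on_measurable: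
  fixes g :: "real \<Rightarrow> real"
  assumes "mono_on {0..} g \<or> antimono_on {0..} g"
  shows "(\<lambda>u. g \<bar>u\<bar>) \<in> borel_measurable borel"
proof -
  define g' where "g' = (\<lambda>t. g (max 0 t))"
  have "g' \<in> borel_measurable borel"
    using assms
  proof
    assume "mono_on {0..} g"
    then have "mono g'" unfolding g'_def mono_def by (auto intro!: gmonoD[of g])
    then show ?thesis by (rule borel_measurable_mono)
  next
    assume a: "antimono_on {0..} g"
    have "mono (\<lambda>t. - g' t)" unfolding g'_def mono_def
      using a by (auto intro!: gantiD[of g])
    then have "(\<lambda>t. - g' t) \<in> borel_measurable borel" by (rule borel_measurable_mono)
    then have "(\<lambda>t. - (- g' t)) \<in> borel_measurable borel" by measurable
    then show ?thesis by simp
  qed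
  moreover have "(\<lambda>u. g \<bar>u\<bar>) = (\<lambda>u. g' \<bar>u\<bar>)" by (simp add: g'_def)
  ultimately show ?thesis by (simp add: measurable_compose[OF borel_measurable_abs])
qed


lemma measBD: "f \<in> borel_measurable (borel \<Otimes>\<^sub>M borel) \<Longrightarrow> sets D = sets borel \<Longrightarrow> f \<in> borel_measurable (borel \<Otimes>\<^sub>M D)"
  by (subst measurable_cong_sets[OF sets_pair_measure_cong[OF refl] refl]) auto

context haar_iso begin

lemma main:
  fixes f g :: "real \<Rightarrow> real" and e :: "nat \<Rightarrow> 'n" and s :: nat and bs :: "nat list" and lam :: real
  assumes fg: "\<forall>u. f u = g \<bar>u\<bar>" and gm: "mono_on {0..} g \<or> antimono_on {0..} g"
    and ebij: "bij_betw e {..<CARD('n)} UNIV" and bsle: "\<forall>m\<in>set bs. 0 < m \<and> m \<le> CARD('n)"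
    and ssum: "sum_list bs = s"
  shows "(\<integral>\<^sup>+ x. ennreal (exp (lam * ort_estimator f e bs z x)) \<partial>ort_ensemble D H bs)
         \<le> (\<integral>\<^sup>+ w. ennreal (exp (lam * iid_estimator f s z w)) \<partial>iid_ensemble D s)"
proof -
  have feq: "f = (\<lambda>u. g \<bar>u\<bar>)" using fg by auto
  have fm[measurable]: "f \<in> borel_measurable borel"
    unfolding feq by (rule mono_on_measurable[OF gm])
  define E where "E = (\<lambda>t. ennreal (exp (lam * f t / real s)))"
  have Em[measurable]: "E \<in> borel_measurable borel" unfolding E_def by measurable
  have Eabs: "E t = E \<bar>t\<bar>" for t by (simp add: E_def feq)
  have Edir: "(\<forall>x y. 0 \<le> x \<longrightarrow> x \<le> y \<longrightarrow> E x \<le> E y) \<or> (\<forall>x y. 0 \<le> x \<longrightarrow> x \<le> y \<longrightarrow> E y \<le> E x)"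
  proof -
    define c where "c = lam / real s"
    have Ec: "E t = ennreal (exp (c * g \<bar>t\<bar>))" for t by (simp add: E_def feq c_def)
    have up: "E x \<le> E y" if "c * g x \<le> c * g y" "0 \<le> x" "0 \<le> y" for x y
      using that by (simp add: Ec ennreal_leI)
    have gx: "(mono_on {0..} g \<longrightarrow> g x \<le> g y) \<and> (antimono_on {0..} g \<longrightarrow> g y \<le> g x)"
      if "0 \<le> x" "x \<le> y" for x y
      using that gmonoD[of g x y] gantiD[of g x y] by auto
    show ?thesis
    proof (cases "(0 \<le> c) = mono_on {0..} g")
      case True
      show ?thesis
      proof (intro disjI1 allI impI)
        fix x y :: real assume xy: "0 \<le> x" "x \<le> y"
        have "c * g x \<le> c * g y"
        proof (cases "0 \<le> c")
          case c: True
          then have "g x \<le> g y" using True gx[OF xy] by auto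
          then show ?thesis using c by (rule mult_left_mono)
        next
          case c: False
          then have "antimono_on {0..} g" using True gm by auto
          then have "g y \<le> g x" using gx[OF xy] by auto
          then show ?thesis using c by (intro mult_left_mono_neg) auto
        qed
        then show "E x \<le> E y" using xy by (intro up) auto
      qed
    next
      case False
      show ?thesis
      proof (intro disjI2 allI impI)
        fix x y :: real assume xy: "0 \<le> x" "x \<le> y"
        have "c * g y \<le> c * g x"
        proof (cases "0 \<le> c")
          case c: True
          then have "antimono_on {0..} g" using False gm by auto
          then have "g y \<le> g x" using gx[OF xy] by auto
          then show ?thesis using c by (rule mult_left_mono)
        next
          case c: False
          then have "mono_on {0..} g" using False by auto
          then have "g x \<le> g y" using gx[OF xy] by auto
          then show ?thesis using c by (intro mult_left_mono_neg) auto
        qed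
        then show "E y \<le> E x" using xy by (intro up) auto
      qed
    qed
  qed
  define \<phi> where "\<phi> = (\<lambda>t. \<integral>\<^sup>+ w. E (norm w * t) \<partial>D)"
  have \<phi>m[measurable]: "\<phi> \<in> borel_measurable borel"
    unfolding \<phi>_def by (rule PD.borel_measurable_nn_integral, rule measBD[OF _ setsD]) measurable
  have \<phi>dir: "mono_dir \<phi>"
  proof -
    have nn: "0 \<le> norm w * x" "norm w * x \<le> norm w * y" if "0 \<le> x" "x \<le> y" for w :: "real^'n" and x y
      using that by (auto intro: mult_left_mono)
    have "(\<forall>x y. 0 \<le> x \<longrightarrow> x \<le> y \<longrightarrow> \<phi> x \<le> \<phi> y) \<or> (\<forall>x y. 0 \<le> x \<longrightarrow> x \<le> y \<longrightarrow> \<phi> y \<le> \<phi> x)"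
      using Edir
    proof
      assume a: "\<forall>x y. 0 \<le> x \<longrightarrow> x \<le> y \<longrightarrow> E x \<le> E y"
      show ?thesis unfolding \<phi>_def
        by (intro disjI1 allI impI nn_integral_mono) (use a nn in blast)
    next
      assume a: "\<forall>x y. 0 \<le> x \<longrightarrow> x \<le> y \<longrightarrow> E y \<le> E x"
      show ?thesis unfolding \<phi>_def
        by (intro disjI2 allI impI nn_integral_mono) (use a nn in blast)
    qed
    then show ?thesis unfolding mono_dir_def .
  qed
  define c where "c = (\<integral>\<^sup>+ w. E \<bar>w \<bullet> z\<bar> \<partial>D)"
  have marg: "(\<integral>\<^sup>+ M. \<phi> \<bar>(M *v z) $ k\<bar> \<partial>H) = c" for k
    unfolding \<phi>_def c_def by (rule marginal[OF Em])
  have block: "(\<integral>\<^sup>+ M. (\<Prod>j<m. \<phi> \<bar>(M *v z) $ e j\<bar>) \<partial>H) \<le> c ^ m" if "m \<le> CARD('n)" for m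
  proof -
    have inj: "inj_on e {..<m}"
      using inj_on_subset[OF bij_betw_imp_inj_on[OF ebij], of "{..<m}"] that by auto
    have "(\<integral>\<^sup>+ M. (\<Prod>j<m. \<phi> \<bar>(M *v z) $ e j\<bar>) \<partial>H) = (\<integral>\<^sup>+ M. (\<Prod>k\<in>e ` {..<m}. \<phi> \<bar>(M *v z) $ k\<bar>) \<partial>H)"
      by (simp add: prod.reindex[OF inj])
    also have "\<dots> \<le> (\<Prod>k\<in>e ` {..<m}. \<integral>\<^sup>+ M. \<phi> \<bar>(M *v z) $ k\<bar> \<partial>H)"
      by (rule key[OF \<phi>m \<phi>dir]) simp
    also have "\<dots> = c ^ m"
      using card_image[OF inj] by (simp add: marg)
    finally show ?thesis .
  qed
  define A where "A = {..<length bs}"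
  define B where "B = (SIGMA b:A. {..<bs ! b})"
  define L where "L = distr D borel (norm :: real^'n \<Rightarrow> real)"
  have finA: "finite A" and finB: "finite B" by (auto simp: A_def B_def)
  have setsL: "sets L = sets borel" by (simp add: L_def)
  have probL: "prob_space L" unfolding L_def by (rule PD.prob_space_distr) (rule measD, simp)
  interpret PL: prob_space L by (rule probL)
  have PSL: "product_sigma_finite (\<lambda>_::nat\<times>nat. L)"
    by (simp add: product_sigma_finite_def PL.sigma_finite_measure_axioms)
  have PSH: "product_sigma_finite (\<lambda>_::nat. H)"
    by (simp add: product_sigma_finite_def P.sigma_finite_measure_axioms)
  have PSD: "product_sigma_finite (\<lambda>_::nat. D)"
    by (simp add: product_sigma_finite_def PD.sigma_finite_measure_axioms)
  interpret PBL: prob_space "PiM B (\<lambda>_. L)" by (rule prob_space_PiM) (rule probL)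
  define MM where "MM = (PiM A (\<lambda>_. H) \<Otimes>\<^sub>M PiM B (\<lambda>_. L))"
  have ens: "ort_ensemble D H bs = MM" unfolding MM_def ort_ensemble_def A_def B_def L_def ..
  define h where "h = (\<lambda>x::(nat \<Rightarrow> real^'n^'n) \<times> (nat \<times> nat \<Rightarrow> real).
     \<Prod>p\<in>B. E (snd x p * ((fst x (fst p) *v z) $ e (snd p))))"
  have O1: "ennreal (exp (lam * ort_estimator f e bs z x)) = h x" for x
  proof -
    have inn: "(snd x (b, j) *\<^sub>R (fst x b $ e j)) \<bullet> z = snd x (b, j) * ((fst x b *v z) $ e j)" for b j
      by (simp add: mv_nth)
    have "(\<Sum>b<length bs. \<Sum>j<bs ! b. f ((snd x (b, j) *\<^sub>R (fst x b $ e j)) \<bullet> z))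
        = (\<Sum>p\<in>B. f (snd x p * ((fst x (fst p) *v z) $ e (snd p))))"
      unfolding B_def A_def inn by (subst sum.Sigma) (auto simp: case_prod_beta)
    then have "lam * ort_estimator f e bs z x = (\<Sum>p\<in>B. lam * f (snd x p * ((fst x (fst p) *v z) $ e (snd p))) / real s)"
      unfolding ort_estimator_def ssum by (simp add: sum_distrib_left sum_divide_distrib)
    then show ?thesis unfolding h_def E_def by (simp add: exp_prod_ennreal[OF finB])
  qed
  have compL: "(\<lambda>x. snd x p) \<in> borel_measurable MM" if "p \<in> B" for p
  proof -
    have "(\<lambda>x. snd x p) \<in> MM \<rightarrow>\<^sub>M L"
      unfolding MM_def by (rule measurable_compose[OF measurable_snd measurable_component_singleton[OF that]])
    then show ?thesis by (simp add: measurable_cong_sets[OF refl setsL])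
  qed
  have compH: "(\<lambda>x. fst x b) \<in> borel_measurable MM" if "b \<in> A" for b
  proof -
    have "(\<lambda>x. fst x b) \<in> MM \<rightarrow>\<^sub>M H"
      unfolding MM_def by (rule measurable_compose[OF measurable_fst measurable_component_singleton[OF that]])
    then show ?thesis by (simp add: measurable_cong_sets[OF refl setsH])
  qed
  have hm: "h \<in> borel_measurable MM"
    unfolding h_def
  proof (rule borel_measurable_prod_ennreal)
    fix p assume p: "p \<in> B"
    then have "fst p \<in> A" by (auto simp: B_def)
    note [measurable] = compL[OF p] compH[OF this]
    show "(\<lambda>x. E (snd x p * ((fst x (fst p) *v z) $ e (snd p)))) \<in> borel_measurable MM" by measurable
  qed
  have O2: "(\<integral>\<^sup>+ x. ennreal (exp (lam * ort_estimator f e bs z x)) \<partial>ort_ensemble D H bs)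
      = (\<integral>\<^sup>+ Ms. (\<integral>\<^sup>+ ls. h (Ms, ls) \<partial>PiM B (\<lambda>_. L)) \<partial>PiM A (\<lambda>_. H))"
    unfolding ens O1 using PBL.nn_integral_fst[OF hm[unfolded MM_def]] by (simp add: MM_def)
  have phiL: "(\<integral>\<^sup>+ l. E (l * c) \<partial>L) = \<phi> \<bar>c\<bar>" for c
  proof -
    have "(\<integral>\<^sup>+ l. E (l * c) \<partial>L) = (\<integral>\<^sup>+ w. E (norm w * c) \<partial>D)"
      unfolding L_def by (rule nn_integral_distr) (auto intro: measD)
    also have "\<dots> = \<phi> \<bar>c\<bar>" unfolding \<phi>_def
      by (rule nn_integral_cong) (metis Eabs abs_mult abs_norm_cancel)
    finally show ?thesis .
  qed
  have O3: "(\<integral>\<^sup>+ ls. h (Ms, ls) \<partial>PiM B (\<lambda>_. L)) = (\<Prod>p\<in>B. \<phi> \<bar>(Ms (fst p) *v z) $ e (snd p)\<bar>)" for Ms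
  proof -
    have "(\<integral>\<^sup>+ ls. h (Ms, ls) \<partial>PiM B (\<lambda>_. L))
        = (\<integral>\<^sup>+ ls. (\<Prod>p\<in>B. (\<lambda>l. E (l * ((Ms (fst p) *v z) $ e (snd p)))) (ls p)) \<partial>PiM B (\<lambda>_. L))"
      unfolding h_def by simp
    also have "\<dots> = (\<Prod>p\<in>B. \<integral>\<^sup>+ l. E (l * ((Ms (fst p) *v z) $ e (snd p))) \<partial>L)"
      by (rule product_sigma_finite.product_nn_integral_prod[OF PSL finB])
         (simp add: measurable_cong_sets[OF setsL refl])
    finally show ?thesis by (simp add: phiL)
  qed
  define \<psi> where "\<psi> = (\<lambda>b M. \<Prod>j<bs ! b. \<phi> \<bar>(M *v z) $ e j\<bar>)"
  have O4: "(\<Prod>p\<in>B. \<phi> \<bar>(Ms (fst p) *v z) $ e (snd p)\<bar>) = (\<Prod>b\<in>A. \<psi> b (Ms b))" for Ms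
    unfolding B_def \<psi>_def using finA by (subst prod.Sigma) (auto simp: case_prod_beta)
  have O5: "(\<integral>\<^sup>+ Ms. (\<Prod>b\<in>A. \<psi> b (Ms b)) \<partial>PiM A (\<lambda>_. H)) = (\<Prod>b\<in>A. integral\<^sup>N H (\<psi> b))"
    by (rule product_sigma_finite.product_nn_integral_prod[OF PSH finA])
       (unfold \<psi>_def, rule measH, measurable)
  have O6: "(\<Prod>b\<in>A. integral\<^sup>N H (\<psi> b)) \<le> c ^ s"
  proof -
    have "(\<Prod>b\<in>A. integral\<^sup>N H (\<psi> b)) \<le> (\<Prod>b\<in>A. c ^ (bs ! b))"
    proof (rule prod_mono_ennreal)
      fix b assume "b \<in> A"
      then have "bs ! b \<le> CARD('n)" using bsle nth_mem[of b bs] by (auto simp: A_def)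
      then show "integral\<^sup>N H (\<psi> b) \<le> c ^ (bs ! b)" unfolding \<psi>_def by (rule block)
    qed
    also have "\<dots> = c ^ s"
      by (simp add: power_sum[symmetric] A_def ssum[symmetric] sum_list_sum_nth atLeast0LessThan)
    finally show ?thesis .
  qed
  have I1: "ennreal (exp (lam * iid_estimator f s z w)) = (\<Prod>i<s. E (w i \<bullet> z))" for w
  proof -
    have "lam * iid_estimator f s z w = (\<Sum>i<s. lam * f (w i \<bullet> z) / real s)"
      unfolding iid_estimator_def by (simp add: sum_distrib_left sum_divide_distrib)
    then show ?thesis unfolding E_def by (simp add: exp_prod_ennreal)
  qed
  have I2: "(\<integral>\<^sup>+ w. ennreal (exp (lam * iid_estimator f s z w)) \<partial>iid_ensemble D s) = c ^ s"
  proof -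
    have "(\<integral>\<^sup>+ w. ennreal (exp (lam * iid_estimator f s z w)) \<partial>iid_ensemble D s)
        = (\<integral>\<^sup>+ w. (\<Prod>i\<in>{..<s}. (\<lambda>v. E (v \<bullet> z)) (w i)) \<partial>PiM {..<s} (\<lambda>_. D))"
      unfolding iid_ensemble_def I1 by simp
    also have "\<dots> = (\<Prod>i\<in>{..<s}. \<integral>\<^sup>+ v. E (v \<bullet> z) \<partial>D)"
      by (rule product_sigma_finite.product_nn_integral_prod[OF PSD]) (auto intro: measD)
    also have "\<dots> = c ^ s"
      unfolding c_def using Eabs by simp
    finally show ?thesis .
  qed
  show ?thesis
    unfolding O2 O3 O4 O5 I2 using O6 .
qed

end

theorem corollary1:
  fixes D :: "(real^'n) measure" and H :: "(real^'n^'n) measure"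
    and e :: "nat \<Rightarrow> 'n" and z :: "real^'n" and f g :: "real \<Rightarrow> real"
    and s :: nat and bs :: "nat list" and lam :: real
  assumes "prob_space D" and "sets D = sets borel" and "isotropic D"
    and "measure D {0} = 0"
    and "haar_orthogonal H"
    and "bij_betw e {..<CARD('n)} UNIV"
    and "\<forall>u. f u = g \<bar>u\<bar>"
    and "mono_on {0..} g \<or> antimono_on {0..} g"
    and "\<forall>m\<in>set bs. 0 < m \<and> m \<le> CARD('n)"
    and "sum_list bs = s"
    and "(\<integral>\<^sup>+ w. ennreal (exp (lam * f (w \<bullet> z) / real s)) \<partial>D) < \<infinity>"
  shows "(\<integral>\<^sup>+ x. ennreal (exp (lam * ort_estimator f e bs z x)) \<partial>ort_ensemble D H bs)
         \<le> (\<integral>\<^sup>+ w. ennreal (exp (lam * iid_estimator f s z w)) \<partial>iid_ensemble D s)"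
proof -
  interpret haar_iso H D
    using assms(1,2,3,5) by (simp add: haar_iso_def haar_def haar_iso_axioms_def)
  show ?thesis by (rule main[OF assms(7) assms(8) assms(6) assms(9) assms(10)])
qed

end
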